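(* Let $f_1,f_2,f_3,f_4$ be strongly hyperbolic functions with $f_1(1)=f_3(1)=1$. The plane $\mathcal{M}(f_1,f_2;f_3,f_4)$ is isomorphic to the classical flat Minkowski plane if and only if $f_i(x)=1/x$ for $i=1,2,3,4$.
   Context: Identify $\mathbb{S}^1$ with $\mathbb{R}\cup\{\infty\}$, $\mathcal{P}=\mathbb{S}^1\times\mathbb{S}^1$, $\mathbb{R}^+=(0,\infty)$. A function $f:\mathbb{R}^+\to\mathbb{R}^+$ is strongly hyperbolic if: (1) $\lim_{x\to0+}f(x)=+\infty$, $\lim_{x\to+\infty}f(x)=0$; (2) $f$ strictly convex; (3) $\lim_{x\to+\infty}f(x+b)/f(x)=1$ for each $b\in\mathbb{R}$; (4) $f$ differentiable; (5) $\ln|f'|$ strictly convex. For strongly hyperbolic $f_1,f_2$, $a>0$, $b,c\in\mathbb{R}$: $f_{a,b,c}(x)=af_1(x+b)+c$ for $x>-b$, $f_{a,b,c}(x)=-af_2(-x-b)+c$ for $x<-b$; $\overline{f_{a,b,c}}=\{(x,f_{a,b,c}(x)):x\ne-b\}\cup\{(-b,\infty),(\infty,c)\}$; $\overline{l_{s,t}}=\{(x,sx+t):x\in\mathbb{R}\}\cup\{(\infty,\infty)\}$; $\mathcal{C}^-(f_1,f_2)=\{\overline{f_{a,b,c}}:a>0,b,c\in\mathbb{R}\}\cup\{\overline{l_{s,t}}:s<0\}$; $\mathcal{C}^+(f_1,f_2)=\varphi(\mathcal{C}^-(f_1,f_2))$ with $\varphi(x,y)=(-x,y)$, $-\infty=\infty$.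 The plane $\mathcal{M}(f_1,f_2;f_3,f_4)$ has point set $\mathcal{P}$ and circle set $\mathcal{C}^-(f_1,f_2)\cup\mathcal{C}^+(f_3,f_4)$. The classical flat Minkowski plane has point set $\mathcal{P}$ and circles the sets $\{(x,sx+t):x\in\mathbb{R}\}\cup\{(\infty,\infty)\}$ ($s\ne0$, $t\in\mathbb{R}$) and $\{(x,y)\in\mathbb{R}^2:(x-b)(y-c)=a\}\cup\{(\infty,c),(b,\infty)\}$ ($a\ne0$, $b,c\in\mathbb{R}$). An isomorphism between two such planes is a bijection of point sets mapping circles onto circles and inducing a bijection of the circle sets. *)

theory Defs
  imports "HOL-Analysis.Analysis"
begin

text \<open>The circle S^1 identified with R extended by a single point at infinity.\<close>
datatype ext = Fin real | Infty

type_synonym point = "ext \<times> ext"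

definition strictly_convex_on :: "real set \<Rightarrow> (real \<Rightarrow> real) \<Rightarrow> bool" where
  "strictly_convex_on S f \<longleftrightarrow>
     (\<forall>x\<in>S. \<forall>y\<in>S. \<forall>t. x \<noteq> y \<and> 0 < t \<and> t < 1 \<longrightarrow>
        f ((1 - t) * x + t * y) < (1 - t) * f x + t * f y)"

text \<open>Strongly hyperbolic functions R+ -> R+ (only values on (0,inf) matter).\<close>
definition strongly_hyperbolic :: "(real \<Rightarrow> real) \<Rightarrow> bool" where
  "strongly_hyperbolic f \<longleftrightarrow>
     (\<forall>x>0. f x > 0) \<and>
     filterlim f at_top (at_right 0) \<and>
     (f \<longlongrightarrow> 0) at_top \<and>
     strictly_convex_on {0<..} f \<and>
     (\<forall>b. ((\<lambda>x. f (x + b) / f x) \<longlongrightarrow> 1) at_top) \<and>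
     (\<forall>x>0. f differentiable (at x)) \<and>
     strictly_convex_on {0<..} (\<lambda>x. ln \<bar>deriv f x\<bar>)"

definition fabc :: "(real \<Rightarrow> real) \<Rightarrow> (real \<Rightarrow> real) \<Rightarrow> real \<Rightarrow> real \<Rightarrow> real \<Rightarrow> real \<Rightarrow> real" where
  "fabc f1 f2 a b c x = (if x > - b then a * f1 (x + b) + c else - a * f2 (- x - b) + c)"

definition fabc_circle :: "(real \<Rightarrow> real) \<Rightarrow> (real \<Rightarrow> real) \<Rightarrow> real \<Rightarrow> real \<Rightarrow> real \<Rightarrow> point set" where
  "fabc_circle f1 f2 a b c =
     {(Fin x, Fin (fabc f1 f2 a b c x)) | x. x \<noteq> - b} \<union> {(Fin (- b), Infty), (Infty, Fin c)}"

definition line_circle :: "real \<Rightarrow> real \<Rightarrow> point set" where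
  "line_circle s t = {(Fin x, Fin (s * x + t)) | x. True} \<union> {(Infty, Infty)}"

definition Cminus :: "(real \<Rightarrow> real) \<Rightarrow> (real \<Rightarrow> real) \<Rightarrow> point set set" where
  "Cminus f1 f2 = {fabc_circle f1 f2 a b c | a b c. a > 0}
                  \<union> {line_circle s t | s t. s < 0}"

fun ext_neg :: "ext \<Rightarrow> ext" where
  "ext_neg (Fin x) = Fin (- x)"
| "ext_neg Infty = Infty"

definition refl_x :: "point \<Rightarrow> point" where
  "refl_x p = (ext_neg (fst p), snd p)"

definition Cplus :: "(real \<Rightarrow> real) \<Rightarrow> (real \<Rightarrow> real) \<Rightarrow> point set set" where
  "Cplus f1 f2 = (\<lambda>C. refl_x ` C) ` Cminus f1 f2"

text \<open>Circle set of the plane M(f1,f2;f3,f4); its point set is UNIV :: point set.\<close>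
definition M_circles :: "(real \<Rightarrow> real) \<Rightarrow> (real \<Rightarrow> real) \<Rightarrow> (real \<Rightarrow> real) \<Rightarrow> (real \<Rightarrow> real) \<Rightarrow> point set set" where
  "M_circles f1 f2 f3 f4 = Cminus f1 f2 \<union> Cplus f3 f4"

text \<open>Circle set of the classical flat Minkowski plane; point set UNIV.\<close>
definition classical_circles :: "point set set" where
  "classical_circles =
     {line_circle s t | s t. s \<noteq> 0}
     \<union> {{(Fin x, Fin y) | x y. (x - b) * (y - c) = a} \<union> {(Infty, Fin c), (Fin b, Infty)}
         | a b c. a \<noteq> 0}"

definition plane_iso :: "(point \<Rightarrow> point) \<Rightarrow> point set set \<Rightarrow> point set set \<Rightarrow> bool" where
  "plane_iso g C1 C2 \<longleftrightarrow> bij g \<and> bij_betw (\<lambda>C. g ` C) C1 C2"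

end

theory Submission
  imports Defs
begin


definition mob :: "real \<Rightarrow> real \<Rightarrow> real \<Rightarrow> real \<Rightarrow> ext \<Rightarrow> ext" where
  "mob p q r s u = (case u of Fin x \<Rightarrow> (if r * x + s = 0 then Infty else Fin ((p * x + q) / (r * x + s)))
                     | Infty \<Rightarrow> (if r = 0 then Infty else Fin (p / r)))"

definition is_mob :: "(ext \<Rightarrow> ext) \<Rightarrow> bool" where
  "is_mob h \<longleftrightarrow> (\<exists>p q r s. p * s - q * r \<noteq> 0 \<and> h = mob p q r s)"

lemma mob_Fin: "mob p q r s (Fin x) = (if r * x + s = 0 then Infty else Fin ((p * x + q) / (r * x + s)))"
  by (simp add: mob_def)
lemma mob_Infty: "mob p q r s Infty = (if r = 0 then Infty else Fin (p / r))"
  by (simp add: mob_def)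

lemma mob_comp_pt:
  assumes d1: "p * s - q * r \<noteq> 0" and d2: "p2 * s2 - q2 * r2 \<noteq> 0"
  shows "mob p q r s (mob p2 q2 r2 s2 u) =
         mob (p * p2 + q * r2) (p * q2 + q * s2) (r * p2 + s * r2) (r * q2 + s * s2) u"
proof (cases u)
  case (Fin x)
  show ?thesis
  proof (cases "r2 * x + s2 = 0")
    case True
    have s2e: "s2 = - r2 * x" using True by linarith
    have nz: "p2 * x + q2 \<noteq> 0"
    proof
      assume "p2 * x + q2 = 0"
      then have "q2 = - p2 * x" by linarith
      then have "p2 * s2 - q2 * r2 = 0" using s2e by simp
      thus False using d2 by simp
    qed
    have e: "(r * p2 + s * r2) * x + (r * q2 + s * s2) = r * (p2 * x + q2)" using s2e
      by (simp add: algebra_simps)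
    have e2: "(p * p2 + q * r2) * x + (p * q2 + q * s2) = p * (p2 * x + q2)" using s2e
      by (simp add: algebra_simps)
    show ?thesis using Fin True nz e e2 by (simp add: mob_Fin mob_Infty)
  next
    case False
    let ?y = "(p2 * x + q2) / (r2 * x + s2)"
    have e: "r * ?y + s = ((r * p2 + s * r2) * x + (r * q2 + s * s2)) / (r2 * x + s2)"
      using False by (simp add: field_simps)
    have e2: "p * ?y + q = ((p * p2 + q * r2) * x + (p * q2 + q * s2)) / (r2 * x + s2)"
      using False by (simp add: field_simps)
    show ?thesis using Fin False e e2 by (simp add: mob_Fin)
  qed
next
  case Infty
  show ?thesis
  proof (cases "r2 = 0")
    case True
    then have "p2 \<noteq> 0" "s2 \<noteq> 0" using d2 by auto
    then show ?thesis using Infty True by (simp add: mob_Infty)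
  next
    case False
    let ?y = "p2 / r2"
    have e: "r * ?y + s = (r * p2 + s * r2) / r2"
      using False by (simp add: field_simps)
    have e2: "p * ?y + q = (p * p2 + q * r2) / r2"
      using False by (simp add: field_simps)
    show ?thesis using Infty False e e2 by (simp add: mob_Fin mob_Infty)
  qed
qed

lemma is_mob_comp: "is_mob m1 \<Longrightarrow> is_mob m2 \<Longrightarrow> is_mob (m1 \<circ> m2)"
proof -
  assume "is_mob m1" "is_mob m2"
  then obtain p q r s p2 q2 r2 s2 where d1: "p * s - q * r \<noteq> 0" and d2: "p2 * s2 - q2 * r2 \<noteq> 0"
    and m: "m1 = mob p q r s" "m2 = mob p2 q2 r2 s2" unfolding is_mob_def by blast
  have "(p * p2 + q * r2) * (r * q2 + s * s2) - (p * q2 + q * s2) * (r * p2 + s * r2) = (p * s - q * r) * (p2 * s2 - q2 * r2)"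
    by (simp add: algebra_simps)
  then have "(p * p2 + q * r2) * (r * q2 + s * s2) - (p * q2 + q * s2) * (r * p2 + s * r2) \<noteq> 0" using d1 d2 by simp
  moreover have "m1 \<circ> m2 = mob (p * p2 + q * r2) (p * q2 + q * s2) (r * p2 + s * r2) (r * q2 + s * s2)"
    using mob_comp_pt[OF d1 d2] m by auto
  ultimately show ?thesis unfolding is_mob_def by blast
qed

lemma mob_id: "mob 1 0 0 1 u = u"
  by (cases u) (auto simp: mob_Fin mob_Infty)

lemma is_mob_inv: assumes "is_mob m" shows "\<exists>mm. is_mob mm \<and> (\<forall>u. mm (m u) = u) \<and> (\<forall>u. m (mm u) = u)"
proof -
  obtain p q r s where d: "p * s - q * r \<noteq> 0" and m: "m = mob p q r s" using assms unfolding is_mob_def by blast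
  define D where "D = p * s - q * r"
  have DD: "p * s - q * r = D" using D_def by simp
  have D0: "D \<noteq> 0" using d DD by simp
  have "(s/D) * (p/D) - (-q/D) * (-r/D) = (p * s - q * r)/(D * D)"
    by (simp add: diff_divide_distrib)
  also have "\<dots> = 1/D" using D0 DD by simp
  finally have dd: "(s/D) * (p/D) - (-q/D) * (-r/D) \<noteq> 0" using D0 by simp
  have DD: "p * s - q * r = D" using D_def by simp
  have e: "s/D * p + -q/D * r = 1" "s/D * q + -q/D * s = 0" "-r/D * p + p/D * r = 0" "-r/D * q + p/D * s = 1"
  proof -
    have "s/D * p + -q/D * r = (p * s - q * r)/D" using D0 by (simp add: field_simps)
    then show "s/D * p + -q/D * r = 1" using DD D0 by simp
    show "s/D * q + -q/D * s = 0" using D0 by (simp add: field_simps)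
    show "-r/D * p + p/D * r = 0" using D0 by (simp add: field_simps)
    have "-r/D * q + p/D * s = (p * s - q * r)/D" using D0 by (simp add: field_simps)
    then show "-r/D * q + p/D * s = 1" using DD D0 by simp
  qed
  have e2: "p * (s/D) + q * (-r/D) = 1" "p * (-q/D) + q * (p/D) = 0" "r * (s/D) + s * (-r/D) = 0" "r * (-q/D) + s * (p/D) = 1"
  proof -
    have "p * (s/D) + q * (-r/D) = (p * s - q * r)/D" using D0 by (simp add: field_simps)
    then show "p * (s/D) + q * (-r/D) = 1" using DD D0 by simp
    show "p * (-q/D) + q * (p/D) = 0" using D0 by (simp add: field_simps)
    show "r * (s/D) + s * (-r/D) = 0" using D0 by (simp add: field_simps)
    have "r * (-q/D) + s * (p/D) = (p * s - q * r)/D" using D0 by (simp add: field_simps)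
    then show "r * (-q/D) + s * (p/D) = 1" using DD D0 by simp
  qed
  have 1: "mob (s/D) (-q/D) (-r/D) (p/D) (m u) = u" for u
    unfolding m using mob_comp_pt[OF dd d, of u] e by (simp add: mob_id)
  have 2: "m (mob (s/D) (-q/D) (-r/D) (p/D) u) = u" for u
    unfolding m using mob_comp_pt[OF d dd, of u] e2 by (simp add: mob_id)
  show ?thesis using 1 2 dd unfolding is_mob_def by blast
qed



lemma additive_mult_id:
  fixes \<phi> :: "real \<Rightarrow> real"
  assumes add: "\<And>x y. \<phi> (x + y) = \<phi> x + \<phi> y"
    and mul: "\<And>x y. \<phi> (x * y) = \<phi> x * \<phi> y"
    and one: "\<phi> 1 = 1"
  shows "\<phi> x = x"
proof -
  have z: "\<phi> 0 = 0" using add[of 0 0] by simp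
  have nonneg: "\<phi> x \<ge> 0" if "x \<ge> 0" for x
  proof -
    have "\<phi> x = \<phi> (sqrt x * sqrt x)" using that by simp
    also have "\<dots> = \<phi> (sqrt x) * \<phi> (sqrt x)" by (rule mul)
    finally show ?thesis by simp
  qed
  have mono: "\<phi> x \<le> \<phi> y" if "x \<le> y" for x y
  proof -
    have "\<phi> y = \<phi> x + \<phi> (y - x)" using add[of x "y - x"] by simp
    moreover have "\<phi> (y - x) \<ge> 0" using nonneg that by simp
    ultimately show ?thesis by simp
  qed
  have neg: "\<phi> (- x) = - \<phi> x" for x using add[of x "-x"] z by simp
  have nat: "\<phi> (of_nat n) = of_nat n" for n
    by (induction n) (simp_all add: z add one)
  have int: "\<phi> (of_int m) = of_int m" for m
  proof (cases "m \<ge> 0")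
    case True
    then show ?thesis using nat[of "nat m"] by simp
  next
    case False
    then have "of_int m = - (of_nat (nat (- m)) :: real)" by simp
    then show ?thesis using nat[of "nat (-m)"] neg False by simp
  qed
  have rat: "\<phi> q = q" if qQ: "q \<in> \<rat>" for q
  proof -
    obtain m :: int and n :: nat where q: "q = of_int m / of_nat n" and n: "n \<noteq> 0"
      using qQ[unfolded Rats_eq_int_div_nat] by blast
    have "of_int m = \<phi> (of_int m)" using int by simp
    also have "of_int m = (of_nat n :: real) * q" using q n by simp
    finally have "\<phi> (of_nat n * q) = of_nat n * q" by simp
    then have "of_nat n * \<phi> q = of_nat n * q" using mul nat by simp
    then show ?thesis using n by simp
  qed
  show ?thesis
  proof (rule ccontr)
    assume "\<phi> x \<noteq> x"
    then consider "\<phi> x < x" | "\<phi> x > x" by linarith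
    then show False
    proof cases
      case 1
      then obtain r where r: "r \<in> \<rat>" "\<phi> x < r" "r < x" using Rats_dense_in_real by blast
      then have "\<phi> r \<le> \<phi> x" using mono by simp
      then show False using rat[OF r(1)] r by simp
    next
      case 2
      then obtain r where r: "r \<in> \<rat>" "x < r" "r < \<phi> x" using Rats_dense_in_real by blast
      then have "\<phi> x \<le> \<phi> r" using mono by simp
      then show False using rat[OF r(1)] r by simp
    qed
  qed
qed

lemma affine_conj:
  fixes \<psi> :: "real \<Rightarrow> real"
  assumes inj: "inj \<psi>" and surj: "surj \<psi>"
    and H: "\<And>s t. s \<noteq> 0 \<Longrightarrow> \<exists>a c. \<forall>x. \<psi> (s * x + t) = a * \<psi> x + c"
  shows "\<exists>a c. a \<noteq> 0 \<and> (\<forall>x. \<psi> x = a * x + c)"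
proof -
  define k where "k = \<psi> 1 - \<psi> 0"
  have k0: "k \<noteq> 0" using inj unfolding k_def by (metis eq_iff_diff_eq_0 inj_eq zero_neq_one)
  define \<phi> where "\<phi> x = (\<psi> x - \<psi> 0) / k" for x
  have z: "\<phi> 0 = 0" by (simp add: \<phi>_def)
  have one: "\<phi> 1 = 1" using k0 by (simp add: \<phi>_def k_def)
  have pinj: "\<phi> x = \<phi> y \<Longrightarrow> x = y" for x y
    using k0 inj by (auto simp: \<phi>_def inj_eq)
  have psurj: "\<exists>x. \<phi> x = y" for y
  proof -
    obtain x where "\<psi> x = y * k + \<psi> 0" using surj by (metis surjD)
    then have "\<phi> x = y" using k0 by (simp add: \<phi>_def)
    then show ?thesis by blast
  qed
  have Hp: "\<exists>a c. \<forall>x. \<phi> (s * x + t) = a * \<phi> x + c" if s0: "s \<noteq> 0" for s t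
  proof -
    obtain a c where ac: "\<forall>x. \<psi> (s * x + t) = a * \<psi> x + c" using H[OF s0] by blast
    have "\<phi> (s * x + t) = a * \<phi> x + (a * \<psi> 0 + c - \<psi> 0) / k" for x
    proof -
      have "\<psi> (s * x + t) = a * \<psi> x + c" using ac by blast
      then show ?thesis using k0 by (simp add: \<phi>_def field_simps)
    qed
    then show ?thesis by blast
  qed
  have add: "\<phi> (x + t) = \<phi> x + \<phi> t" for x t
  proof (cases "t = 0")
    case True then show ?thesis using z by simp
  next
    case False
    obtain a c where ac: "\<forall>x. \<phi> (1 * x + t) = a * \<phi> x + c" using Hp[of 1 t, OF one_neq_zero] by blast
    have a1: "a = 1"
    proof (rule ccontr)
      assume "a \<noteq> 1"
      obtain x0 where x0: "\<phi> x0 = c / (1 - a)" using psurj by blast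
      have "\<phi> (x0 + t) = a * (c / (1 - a)) + c" using ac x0 by simp
      also have "\<dots> = c / (1 - a)" using \<open>a \<noteq> 1\<close> by (simp add: field_simps)
      finally have "x0 + t = x0" using x0 pinj by metis
      then show False using False by simp
    qed
    have "c = \<phi> t" using ac[rule_format, of 0] z by simp
    then show ?thesis using ac a1 by (metis mult_1)
  qed
  have mul: "\<phi> (s * x) = \<phi> s * \<phi> x" for s x
  proof (cases "s = 0")
    case True then show ?thesis using z by simp
  next
    case False
    obtain a c where ac: "\<forall>x. \<phi> (s * x + 0) = a * \<phi> x + c" using Hp[OF False, of 0] by blast
    have c0: "c = 0" using ac[rule_format, of 0] z by simp
    have "a = \<phi> s" using ac[rule_format, of 1] one c0 by simp
    then show ?thesis using ac c0 by simp
  qed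
  have "\<phi> x = x" for x by (rule additive_mult_id[OF add mul one])
  then have "\<psi> x = k * x + \<psi> 0" for x using k0 unfolding \<phi>_def by (metis nonzero_eq_divide_eq diff_eq_eq mult.commute)
  then show ?thesis using k0 by blast
qed



definition lin :: "real \<Rightarrow> real \<Rightarrow> ext \<Rightarrow> ext" where
  "lin s t u = (case u of Fin x \<Rightarrow> Fin (s * x + t) | Infty \<Rightarrow> Infty)"

fun unfin :: "ext \<Rightarrow> real" where
  "unfin (Fin x) = x" | "unfin Infty = 0"

lemma mob_to_inf: "\<exists>\<nu>. is_mob \<nu> \<and> \<nu> w = Infty"
proof (cases w)
  case (Fin w0)
  have "mob 0 1 1 (- w0) w = Infty" using Fin by (simp add: mob_Fin)
  moreover have "is_mob (mob 0 1 1 (- w0))" unfolding is_mob_def by (intro exI[of _ 0] exI[of _ 1] exI[of _ "- w0"]) simp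
  ultimately show ?thesis by blast
next
  case Infty
  have "mob 1 0 0 1 w = Infty" using Infty by (simp add: mob_Infty)
  moreover have "is_mob (mob 1 0 0 1)" unfolding is_mob_def by (intro exI[of _ 1] exI[of _ 0]) simp
  ultimately show ?thesis by blast
qed

lemma mob_fix_inf:
  assumes "is_mob m" "m Infty = Infty"
  shows "\<exists>a c. a \<noteq> 0 \<and> (\<forall>y. m (Fin y) = Fin (a * y + c))"
proof -
  obtain p q r s where d: "p * s - q * r \<noteq> 0" and m: "m = mob p q r s" using assms(1) unfolding is_mob_def by blast
  have r0: "r = 0" using assms(2) m by (simp add: mob_Infty split: if_splits)
  then have ps: "p \<noteq> 0" "s \<noteq> 0" using d by auto
  have "m (Fin y) = Fin ((p / s) * y + q / s)" for y using m r0 ps by (simp add: mob_Fin add_divide_distrib)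
  then show ?thesis using ps by (intro exI[of _ "p / s"] exI[of _ "q / s"]) auto
qed

lemma conj_mob:
  assumes bs: "bij \<sigma>"
    and H: "\<And>s t. s \<noteq> 0 \<Longrightarrow> \<exists>m. is_mob m \<and> (\<forall>u. \<sigma> (lin s t u) = m (\<sigma> u))"
  shows "is_mob \<sigma>"
proof -
  obtain \<nu> where \<nu>: "is_mob \<nu>" "\<nu> (\<sigma> Infty) = Infty" using mob_to_inf by blast
  obtain \<nu>' where \<nu>': "is_mob \<nu>'" "\<forall>u. \<nu>' (\<nu> u) = u" "\<forall>u. \<nu> (\<nu>' u) = u" using is_mob_inv[OF \<nu>(1)] by blast
  define \<psi> where "\<psi> u = \<nu> (\<sigma> u)" for u
  have \<psi>inf: "\<psi> Infty = Infty" using \<nu> by (simp add: \<psi>_def)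
  have \<psi>inj: "\<psi> u = \<psi> v \<Longrightarrow> u = v" for u v
    using \<nu>'(2) bs unfolding \<psi>_def bij_def inj_def by metis
  have \<psi>surj: "\<exists>u. \<psi> u = w" for w
  proof -
    obtain u where "\<sigma> u = \<nu>' w" using bs unfolding bij_def surj_def by metis
    then show ?thesis using \<nu>'(3) unfolding \<psi>_def by metis
  qed
  have \<psi>fin: "\<psi> (Fin x) = Fin (unfin (\<psi> (Fin x)))" for x
  proof (cases "\<psi> (Fin x)")
    case Infty
    then have "Fin x = Infty" using \<psi>inf \<psi>inj by metis
    then show ?thesis by simp
  qed simp
  define \<psi>0 where "\<psi>0 x = unfin (\<psi> (Fin x))" for x
  have \<psi>0: "\<psi> (Fin x) = Fin (\<psi>0 x)" for x using \<psi>fin \<psi>0_def by simp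
  have inj0: "inj \<psi>0"
    unfolding inj_def using \<psi>0 \<psi>inj by (metis ext.inject)
  have surj0: "surj \<psi>0"
  proof -
    have "\<exists>x. y = \<psi>0 x" for y
    proof -
      obtain u where u: "\<psi> u = Fin y" using \<psi>surj by blast
      show ?thesis
      proof (cases u)
        case (Fin x) then show ?thesis using u \<psi>0 by auto
      next
        case Infty then show ?thesis using u \<psi>inf by simp
      qed
    qed
    then show ?thesis by blast
  qed
  have aff: "\<exists>a c. \<forall>x. \<psi>0 (s * x + t) = a * \<psi>0 x + c" if s0: "s \<noteq> 0" for s t
  proof -
    obtain m where m: "is_mob m" "\<forall>u. \<sigma> (lin s t u) = m (\<sigma> u)" using H[OF s0] by blast
    define m2 where "m2 = \<nu> \<circ> m \<circ> \<nu>'"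
    have m2mob: "is_mob m2" unfolding m2_def by (intro is_mob_comp \<nu>(1) \<nu>'(1) m(1))
    have m2e: "\<psi> (lin s t u) = m2 (\<psi> u)" for u
      using m(2) \<nu>'(2) unfolding m2_def \<psi>_def by simp
    have "m2 Infty = Infty" using m2e[of Infty] \<psi>inf by (simp add: lin_def)
    then obtain a c where ac: "\<forall>y. m2 (Fin y) = Fin (a * y + c)" using mob_fix_inf[OF m2mob] by blast
    have "\<psi>0 (s * x + t) = a * \<psi>0 x + c" for x
      using m2e[of "Fin x"] ac \<psi>0 by (simp add: lin_def)
    then show ?thesis by blast
  qed
  obtain a c where ac: "a \<noteq> 0" "\<forall>x. \<psi>0 x = a * x + c" using affine_conj[OF inj0 surj0 aff] by blast
  have "\<psi> = mob a c 0 1"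
  proof
    fix u show "\<psi> u = mob a c 0 1 u"
      by (cases u) (simp_all add: \<psi>0 ac \<psi>inf mob_Fin mob_Infty)
  qed
  then have "is_mob \<psi>" using ac(1) unfolding is_mob_def by (intro exI[of _ a] exI[of _ c] exI[of _ 0] exI[of _ 1]) simp
  then have "is_mob (\<nu>' \<circ> \<psi>)" using \<nu>'(1) is_mob_comp by blast
  moreover have "\<nu>' \<circ> \<psi> = \<sigma>" using \<nu>'(2) unfolding \<psi>_def by auto
  ultimately show ?thesis by simp
qed



lemma sh_pos: "strongly_hyperbolic f \<Longrightarrow> x > 0 \<Longrightarrow> f x > 0"
  unfolding strongly_hyperbolic_def by blast

lemma sh_decr:
  assumes sh: "strongly_hyperbolic f" and x: "0 < x" and xy: "x < y"
  shows "f y < f x"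
proof (rule ccontr)
  assume "\<not> f y < f x"
  then have le: "f x \<le> f y" by simp
  have conv: "strictly_convex_on {0<..} f" and lim: "(f \<longlongrightarrow> 0) at_top"
    using sh unfolding strongly_hyperbolic_def by blast+
  have grow: "f y < f z" if z: "z > y" for z
  proof -
    define t where "t = (y - x) / (z - x)"
    have t: "0 < t" "t < 1" using x xy z by (auto simp: t_def field_simps)
    have zx: "z - x \<noteq> 0" using xy z by simp
    have "t * (z - x) = y - x" using zx by (simp add: t_def)
    then have yt: "(1 - t) * x + t * z = y" by (simp add: algebra_simps)
    have "f ((1 - t) * x + t * z) < (1 - t) * f x + t * f z"
      using conv x xy z t unfolding strictly_convex_on_def by auto
    then have "f y < (1 - t) * f x + t * f z" using yt by simp
    also have "\<dots> \<le> (1 - t) * f y + t * f z" using le t by (simp add: mult_left_mono)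
    finally have "t * f y < t * f z" by (simp add: algebra_simps)
    then show ?thesis using t by simp
  qed
  have fy: "f y > 0" using sh_pos[OF sh] x xy by simp
  have "eventually (\<lambda>z. f z < f y) at_top" using order_tendstoD(2)[OF lim fy] .
  moreover have "eventually (\<lambda>z. z > y) at_top" by (rule eventually_gt_at_top)
  ultimately have "eventually (\<lambda>z. f z < f y \<and> z > y) at_top"
    by (rule eventually_conj)
  then obtain z where "f z < f y" "z > y" by (auto simp: eventually_at_top_linorder)
  then show False using grow by fastforce
qed

lemma sh_inj:
  assumes "strongly_hyperbolic f" "0 < x" "0 < y" "f x = f y" shows "x = y"
  using sh_decr[OF assms(1)] assms(2-4) by (metis less_irrefl linorder_neqE_linordered_idom)

definition nojoin :: "point set \<Rightarrow> bool" where
  "nojoin C \<longleftrightarrow> (\<forall>p\<in>C. \<forall>q\<in>C. (fst p = fst q \<or> snd p = snd q) \<longrightarrow> p = q)"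

lemma fabc_gt:
  assumes "strongly_hyperbolic f1" "a > 0" "x > - b" shows "fabc f1 f2 a b c x > c"
  using sh_pos[OF assms(1), of "x + b"] assms by (simp add: fabc_def)

lemma fabc_lt:
  assumes "strongly_hyperbolic f2" "a > 0" "x < - b" shows "fabc f1 f2 a b c x < c"
  using sh_pos[OF assms(1), of "- x - b"] assms by (simp add: fabc_def)

lemma fabc_inj:
  assumes s1: "strongly_hyperbolic f1" and s2: "strongly_hyperbolic f2" and a: "a > 0"
    and x: "x \<noteq> - b" and y: "y \<noteq> - b" and e: "fabc f1 f2 a b c x = fabc f1 f2 a b c y"
  shows "x = y"
proof -
  consider "x > - b" "y > - b" | "x < - b" "y < - b" | "x > - b" "y < - b" | "x < - b" "y > - b"
    using x y by linarith
  then show ?thesis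
  proof cases
    case 1
    then have "f1 (x + b) = f1 (y + b)" using e a by (simp add: fabc_def)
    then have "x + b = y + b" using sh_inj[OF s1, of "x + b" "y + b"] 1 by simp
    then show ?thesis by simp
  next
    case 2
    then have "f2 (- x - b) = f2 (- y - b)" using e a by (simp add: fabc_def)
    then have "- x - b = - y - b" using sh_inj[OF s2, of "- x - b" "- y - b"] 2 by simp
    then show ?thesis by simp
  next
    case 3
    have "fabc f1 f2 a b c x > c" by (rule fabc_gt[OF s1 a]) (use 3 in simp)
    moreover have "fabc f1 f2 a b c y < c" by (rule fabc_lt[OF s2 a]) (use 3 in simp)
    ultimately show ?thesis using e by simp
  next
    case 4
    have "fabc f1 f2 a b c y > c" by (rule fabc_gt[OF s1 a]) (use 4 in simp)
    moreover have "fabc f1 f2 a b c x < c" by (rule fabc_lt[OF s2 a]) (use 4 in simp)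
    ultimately show ?thesis using e by simp
  qed
qed

lemma fabc_ne_c:
  assumes s1: "strongly_hyperbolic f1" and s2: "strongly_hyperbolic f2" and a: "a > 0"
    and x: "x \<noteq> - b" shows "fabc f1 f2 a b c x \<noteq> c"
proof (cases "x > - b")
  case True
  have "fabc f1 f2 a b c x > c" by (rule fabc_gt[OF s1 a]) (use True in simp)
  then show ?thesis by simp
next
  case False
  have "fabc f1 f2 a b c x < c" by (rule fabc_lt[OF s2 a]) (use False x in simp)
  then show ?thesis by simp
qed

lemma Cminus_nojoin:
  assumes s1: "strongly_hyperbolic f1" and s2: "strongly_hyperbolic f2" and C: "C \<in> Cminus f1 f2"
  shows "nojoin C"
proof -
  from C consider (h) a b c where "a > 0" "C = fabc_circle f1 f2 a b c"
    | (l) s t where "s < 0" "C = line_circle s t"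
    unfolding Cminus_def by blast
  then show ?thesis
  proof cases
    case h
    have inj: "\<And>x y. x \<noteq> - b \<Longrightarrow> y \<noteq> - b \<Longrightarrow> fabc f1 f2 a b c x = fabc f1 f2 a b c y \<Longrightarrow> x = y"
      using fabc_inj[OF s1 s2 h(1)] by blast
    have nec: "\<And>x. x \<noteq> - b \<Longrightarrow> fabc f1 f2 a b c x \<noteq> c"
      using fabc_ne_c[OF s1 s2 h(1)] by blast
    have nec2: "\<And>x. x \<noteq> - b \<Longrightarrow> c \<noteq> fabc f1 f2 a b c x"
      using nec by metis
    show ?thesis unfolding nojoin_def h(2) fabc_circle_def
      using inj nec nec2 by auto
  next
    case l
    show ?thesis unfolding nojoin_def l(2) line_circle_def using l(1) by auto
  qed
qed

lemma ext_neg_inj: "ext_neg u = ext_neg v \<Longrightarrow> u = v"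
  by (cases u; cases v) auto

lemma nojoin_refl: "nojoin D \<Longrightarrow> nojoin (refl_x ` D)"
  unfolding nojoin_def refl_x_def by (auto dest: ext_neg_inj)

lemma M_nojoin:
  assumes "strongly_hyperbolic f1" "strongly_hyperbolic f2" "strongly_hyperbolic f3" "strongly_hyperbolic f4"
    and "C \<in> M_circles f1 f2 f3 f4"
  shows "nojoin C"
  using assms Cminus_nojoin[of f1 f2] Cminus_nojoin[of f3 f4] nojoin_refl
  unfolding M_circles_def Cplus_def by blast



lemma Cl_mob:
  assumes "K \<in> classical_circles"
  shows "\<exists>m. is_mob m \<and> (\<forall>p\<in>K. snd p = m (fst p))"
  using assms unfolding classical_circles_def
proof (elim UnE CollectE exE conjE)
  fix s t assume K: "K = line_circle s t" and s: "s \<noteq> 0"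
  have "is_mob (mob s t 0 1)" unfolding is_mob_def using s by (intro exI[of _ s] exI[of _ t] exI[of _ 0] exI[of _ 1]) simp
  moreover have "\<forall>p\<in>K. snd p = mob s t 0 1 (fst p)"
    unfolding K line_circle_def by (auto simp: mob_Fin mob_Infty)
  ultimately show ?thesis by blast
next
  fix a b c assume K: "K = {(Fin x, Fin y) |x y. (x - b) * (y - c) = a} \<union> {(Infty, Fin c), (Fin b, Infty)}"
    and a: "a \<noteq> 0"
  have "is_mob (mob c (a - c * b) 1 (- b))" unfolding is_mob_def using a
    by (intro exI[of _ c] exI[of _ "a - c * b"] exI[of _ 1] exI[of _ "- b"]) (simp add: algebra_simps)
  moreover have "\<forall>p\<in>K. snd p = mob c (a - c * b) 1 (- b) (fst p)"
  proof
    fix p assume "p \<in> K"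
    then consider (f) x y where "p = (Fin x, Fin y)" "(x - b) * (y - c) = a" | (i) "p = (Infty, Fin c)" | (j) "p = (Fin b, Infty)"
      unfolding K by blast
    then show "snd p = mob c (a - c * b) 1 (- b) (fst p)"
    proof cases
      case f
      have xb: "x - b \<noteq> 0" using f(2) a by auto
      have "y = (c * x + (a - c * b)) / (x - b)" using xb f(2) by (simp add: field_simps)
      then show ?thesis using f(1) xb by (simp add: mob_Fin)
    qed (auto simp: mob_Fin mob_Infty)
  qed
  ultimately show ?thesis by blast
qed

lemma mob_inj: "is_mob m \<Longrightarrow> m u = m v \<Longrightarrow> u = v"
  using is_mob_inv by metis

lemma Cl_nojoin: assumes "K \<in> classical_circles" shows "nojoin K"
proof -
  obtain m where m: "is_mob m" "\<forall>p\<in>K. snd p = m (fst p)" using Cl_mob[OF assms] by blast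
  show ?thesis unfolding nojoin_def
  proof (intro ballI impI)
    fix p q assume pq: "p \<in> K" "q \<in> K" "fst p = fst q \<or> snd p = snd q"
    then have "fst p = fst q" using m mob_inj by metis
    moreover then have "snd p = snd q" using m pq by metis
    ultimately show "p = q" by (simp add: prod_eq_iff)
  qed
qed

definition hyp :: "real \<Rightarrow> real \<Rightarrow> real \<Rightarrow> point set" where
  "hyp a b c = {(Fin x, Fin y) |x y. (x - b) * (y - c) = a} \<union> {(Infty, Fin c), (Fin b, Infty)}"

lemma hyp_in_Cl: "a \<noteq> 0 \<Longrightarrow> hyp a b c \<in> classical_circles"
  unfolding classical_circles_def hyp_def by blast

lemma hyp_m1: "(Infty, Fin c) \<in> hyp a b c" and hyp_m2: "(Fin b, Infty) \<in> hyp a b c"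
  unfolding hyp_def by auto

lemma hyp_m3: "(x - b) * (y - c) = a \<Longrightarrow> (Fin x, Fin y) \<in> hyp a b c"
  unfolding hyp_def by blast

lemma line_m: "(Fin x, Fin (s * x + t)) \<in> line_circle s t"
  unfolding line_circle_def by auto
lemma line_m2: "(Infty, Infty) \<in> line_circle s t"
  unfolding line_circle_def by auto

lemma line_in_Cl: "s \<noteq> 0 \<Longrightarrow> line_circle s t \<in> classical_circles"
  unfolding classical_circles_def by blast

definition clj :: "point \<Rightarrow> point \<Rightarrow> bool" where
  "clj p q \<longleftrightarrow> (\<exists>K\<in>classical_circles. p \<in> K \<and> q \<in> K)"

lemma clj_sym: "clj p q \<Longrightarrow> clj q p" unfolding clj_def by blast

lemma clj_a: assumes "x1 \<noteq> x2" "y1 \<noteq> y2" shows "clj (Fin x1, Fin y1) (Fin x2, Fin y2)"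
proof -
  have x12: "x2 - x1 \<noteq> 0" and y12: "y2 - y1 \<noteq> 0" using assms by auto
  define s where "s = (y2 - y1) / (x2 - x1)"
  have s0: "s \<noteq> 0" using x12 y12 by (simp add: s_def)
  have "s * (x2 - x1) = y2 - y1" using x12 by (simp add: s_def)
  then have e: "s * x2 + (y1 - s * x1) = y2" by (simp add: algebra_simps)
  have "(Fin x1, Fin y1) \<in> line_circle s (y1 - s * x1)" using line_m[of x1 s "y1 - s * x1"] by simp
  moreover have "(Fin x2, Fin y2) \<in> line_circle s (y1 - s * x1)" using line_m[of x2 s "y1 - s * x1"] e by simp
  ultimately show ?thesis unfolding clj_def using line_in_Cl[OF s0] by blast
qed

lemma clj_b: "clj (Infty, Infty) (Fin x, Fin y)"
proof -
  have "(Fin x, Fin y) \<in> line_circle 1 (y - x)" using line_m[of x 1 "y - x"] by simp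
  then show ?thesis unfolding clj_def using line_in_Cl[of 1, OF one_neq_zero] line_m2 by blast
qed

lemma clj_c: "clj (Infty, Fin c) (Fin b, Infty)"
proof -
  have "hyp 1 b c \<in> classical_circles" by (rule hyp_in_Cl) simp
  then show ?thesis unfolding clj_def using hyp_m1[of c 1 b] hyp_m2[of b 1 c] by blast
qed

lemma clj_d: assumes "y \<noteq> c" shows "clj (Infty, Fin c) (Fin x, Fin y)"
proof -
  have yc: "y - c \<noteq> 0" using assms by simp
  have "(Fin x, Fin y) \<in> hyp (y - c) (x - 1) c" using hyp_m3[of x "x - 1" y c] by simp
  moreover have "hyp (y - c) (x - 1) c \<in> classical_circles" using hyp_in_Cl[OF yc] by blast
  ultimately show ?thesis unfolding clj_def using hyp_m1[of c "y - c" "x - 1"] by blast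
qed

lemma clj_e: assumes "x \<noteq> b" shows "clj (Fin b, Infty) (Fin x, Fin y)"
proof -
  have xb: "x - b \<noteq> 0" using assms by simp
  have "(Fin x, Fin y) \<in> hyp (x - b) b (y - 1)" using hyp_m3[of x b y "y - 1"] by simp
  moreover have "hyp (x - b) b (y - 1) \<in> classical_circles" using hyp_in_Cl[OF xb] by blast
  ultimately show ?thesis unfolding clj_def using hyp_m2[of b "x - b" "y - 1"] by blast
qed

lemma clj_b2: "clj (Fin x, Fin y) (Infty, Infty)" by (rule clj_sym[OF clj_b])
lemma clj_c2: "clj (Fin b, Infty) (Infty, Fin c)" by (rule clj_sym[OF clj_c])
lemma clj_d2: "y \<noteq> c \<Longrightarrow> clj (Fin x, Fin y) (Infty, Fin c)" using clj_sym[OF clj_d] by blast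
lemma clj_e2: "x \<noteq> b \<Longrightarrow> clj (Fin x, Fin y) (Fin b, Infty)" using clj_sym[OF clj_e] by blast

lemma Cl_join:
  assumes "fst p \<noteq> fst q" "snd p \<noteq> snd q"
  shows "\<exists>K\<in>classical_circles. p \<in> K \<and> q \<in> K"
proof -
  obtain u1 v1 u2 v2 where p: "p = (u1, v1)" and q: "q = (u2, v2)" by (cases p, cases q) auto
  have ne: "u1 \<noteq> u2" "v1 \<noteq> v2" using assms p q by auto
  have "clj (u1, v1) (u2, v2)"
    using ne
    apply (cases u1; cases v1; cases u2; cases v2)
    by (simp_all add: clj_a clj_b clj_c clj_d clj_e clj_b2 clj_c2 clj_d2 clj_e2)
  then show ?thesis using p q unfolding clj_def by simp
qed



lemma fabc_m1: "x \<noteq> - b \<Longrightarrow> (Fin x, Fin (fabc f1 f2 a b c x)) \<in> fabc_circle f1 f2 a b c"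
  unfolding fabc_circle_def by blast
lemma fabc_m2: "(Fin (- b), Infty) \<in> fabc_circle f1 f2 a b c"
  unfolding fabc_circle_def by blast
lemma fabc_m3: "(Infty, Fin c) \<in> fabc_circle f1 f2 a b c"
  unfolding fabc_circle_def by blast

lemma fabc_in_M: "a > 0 \<Longrightarrow> fabc_circle f1 f2 a b c \<in> M_circles f1 f2 f3 f4"
  unfolding M_circles_def Cminus_def by blast

lemma line_in_M1: "s < 0 \<Longrightarrow> line_circle s t \<in> M_circles f1 f2 f3 f4"
  unfolding M_circles_def Cminus_def by blast

lemma line_in_M2: "s > 0 \<Longrightarrow> refl_x ` line_circle (- s) t \<in> M_circles f1 f2 f3 f4"
proof -
  assume "s > 0"
  then have "line_circle (- s) t \<in> Cminus f3 f4" unfolding Cminus_def by force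
  then show ?thesis unfolding M_circles_def Cplus_def by blast
qed

lemma refl_line_m: "(Fin x, Fin (s * x + t)) \<in> refl_x ` line_circle (- s) t"
proof -
  have "(Fin (- x), Fin ((- s) * (- x) + t)) \<in> line_circle (- s) t" by (rule line_m)
  moreover have "refl_x (Fin (- x), Fin ((- s) * (- x) + t)) = (Fin x, Fin (s * x + t))"
    by (simp add: refl_x_def)
  ultimately show ?thesis by (metis image_eqI)
qed

lemma refl_line_m2: "(Infty, Infty) \<in> refl_x ` line_circle (- s) t"
proof -
  have "refl_x (Infty, Infty) = (Infty, Infty)" by (simp add: refl_x_def)
  then show ?thesis using line_m2 by (metis image_eqI)
qed

lemma lin_line_M:
  assumes "s \<noteq> 0"
  shows "\<exists>C\<in>M_circles f1 f2 f3 f4. \<forall>u. (u, lin s t u) \<in> C"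
proof (cases "s < 0")
  case True
  have "\<forall>u. (u, lin s t u) \<in> line_circle s t"
  proof
    fix u show "(u, lin s t u) \<in> line_circle s t"
      by (cases u) (simp_all add: lin_def line_m line_m2)
  qed
  then show ?thesis using line_in_M1[OF True] by blast
next
  case False
  then have s: "s > 0" using assms by simp
  have "\<forall>u. (u, lin s t u) \<in> refl_x ` line_circle (- s) t"
  proof
    fix u show "(u, lin s t u) \<in> refl_x ` line_circle (- s) t"
      by (cases u) (simp_all add: lin_def refl_line_m refl_line_m2)
  qed
  then show ?thesis using line_in_M2[OF s] by blast
qed

definition mj :: "point set set \<Rightarrow> point \<Rightarrow> point \<Rightarrow> bool" where
  "mj CC p q \<longleftrightarrow> (\<exists>C\<in>CC. p \<in> C \<and> q \<in> C)"

lemma mj_sym: "mj CC p q \<Longrightarrow> mj CC q p" unfolding mj_def by blast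

lemma mj_a: assumes "x1 \<noteq> x2" "y1 \<noteq> y2" shows "mj (M_circles f1 f2 f3 f4) (Fin x1, Fin y1) (Fin x2, Fin y2)"
proof -
  have x12: "x2 - x1 \<noteq> 0" and y12: "y2 - y1 \<noteq> 0" using assms by auto
  define s where "s = (y2 - y1) / (x2 - x1)"
  have s0: "s \<noteq> 0" using x12 y12 by (simp add: s_def)
  have "s * (x2 - x1) = y2 - y1" using x12 by (simp add: s_def)
  then have e: "s * x2 + (y1 - s * x1) = y2" by (simp add: algebra_simps)
  obtain C where C: "C \<in> M_circles f1 f2 f3 f4" "\<forall>u. (u, lin s (y1 - s * x1) u) \<in> C"
    using lin_line_M[OF s0] by blast
  have "(Fin x1, Fin y1) \<in> C" using C(2)[rule_format, of "Fin x1"] by (simp add: lin_def)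
  moreover have "(Fin x2, Fin y2) \<in> C" using C(2)[rule_format, of "Fin x2"] e by (simp add: lin_def)
  ultimately show ?thesis unfolding mj_def using C(1) by blast
qed

lemma mj_b: "mj (M_circles f1 f2 f3 f4) (Infty, Infty) (Fin x, Fin y)"
proof -
  have m: "line_circle (- 1) (y + x) \<in> M_circles f1 f2 f3 f4" by (rule line_in_M1) simp
  have "(Fin x, Fin y) \<in> line_circle (- 1) (y + x)" using line_m[of x "- 1" "y + x"] by simp
  then show ?thesis unfolding mj_def using m line_m2 by blast
qed

lemma mj_c: "mj (M_circles f1 f2 f3 f4) (Infty, Fin c) (Fin b, Infty)"
proof -
  have m: "fabc_circle f1 f2 1 (- b) c \<in> M_circles f1 f2 f3 f4" by (rule fabc_in_M) simp
  have m2: "(Fin b, Infty) \<in> fabc_circle f1 f2 1 (- b) c" using fabc_m2[of "- b" f1 f2 1 c] by simp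
  have m3: "(Infty, Fin c) \<in> fabc_circle f1 f2 1 (- b) c" by (rule fabc_m3)
  show ?thesis unfolding mj_def by (rule bexI[OF _ m]) (use m2 m3 in simp)
qed

lemma mj_d:
  assumes f11: "f1 1 = 1" and s2: "strongly_hyperbolic f2" and yc: "y \<noteq> c"
  shows "mj (M_circles f1 f2 f3 f4) (Infty, Fin c) (Fin x, Fin y)"
proof (cases "y > c")
  case True
  have m: "fabc_circle f1 f2 (y - c) (1 - x) c \<in> M_circles f1 f2 f3 f4" by (rule fabc_in_M) (use True in simp)
  have "fabc f1 f2 (y - c) (1 - x) c x = y" using f11 by (simp add: fabc_def)
  then have "(Fin x, Fin y) \<in> fabc_circle f1 f2 (y - c) (1 - x) c" using fabc_m1[of x "1 - x" f1 f2 "y - c" c] by simp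
  moreover have "(Infty, Fin c) \<in> fabc_circle f1 f2 (y - c) (1 - x) c" by (rule fabc_m3)
  ultimately show ?thesis unfolding mj_def by (intro bexI[OF _ m]) simp
next
  case False
  then have cy: "c > y" using yc by simp
  have f2p: "f2 1 > 0" using sh_pos[OF s2] by simp
  define a where "a = (c - y) / f2 1"
  have a: "a > 0" using cy f2p by (simp add: a_def)
  have m: "fabc_circle f1 f2 a (- x - 1) c \<in> M_circles f1 f2 f3 f4" by (rule fabc_in_M) (use a in simp)
  have "fabc f1 f2 a (- x - 1) c x = - a * f2 1 + c" by (simp add: fabc_def)
  also have "\<dots> = y" using f2p by (simp add: a_def)
  finally have "(Fin x, Fin y) \<in> fabc_circle f1 f2 a (- x - 1) c" using fabc_m1[of x "- x - 1" f1 f2 a c] by simp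
  moreover have "(Infty, Fin c) \<in> fabc_circle f1 f2 a (- x - 1) c" by (rule fabc_m3)
  ultimately show ?thesis unfolding mj_def by (intro bexI[OF _ m]) simp
qed

lemma mj_e:
  assumes xb: "x \<noteq> b"
  shows "mj (M_circles f1 f2 f3 f4) (Fin b, Infty) (Fin x, Fin y)"
proof (cases "x > b")
  case True
  define cc where "cc = y - f1 (x - b)"
  have m: "fabc_circle f1 f2 1 (- b) cc \<in> M_circles f1 f2 f3 f4" by (rule fabc_in_M) simp
  have "fabc f1 f2 1 (- b) cc x = y" using True by (simp add: fabc_def cc_def)
  then have "(Fin x, Fin y) \<in> fabc_circle f1 f2 1 (- b) cc" using fabc_m1[of x "- b" f1 f2 1 cc] True by simp
  moreover have "(Fin b, Infty) \<in> fabc_circle f1 f2 1 (- b) cc" using fabc_m2[of "- b" f1 f2 1 cc] by simp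
  ultimately show ?thesis unfolding mj_def by (intro bexI[OF _ m]) simp
next
  case False
  then have xb2: "x < b" using xb by simp
  define cc where "cc = y + f2 (b - x)"
  have m: "fabc_circle f1 f2 1 (- b) cc \<in> M_circles f1 f2 f3 f4" by (rule fabc_in_M) simp
  have "fabc f1 f2 1 (- b) cc x = y" using xb2 by (simp add: fabc_def cc_def)
  then have "(Fin x, Fin y) \<in> fabc_circle f1 f2 1 (- b) cc" using fabc_m1[of x "- b" f1 f2 1 cc] xb2 by simp
  moreover have "(Fin b, Infty) \<in> fabc_circle f1 f2 1 (- b) cc" using fabc_m2[of "- b" f1 f2 1 cc] by simp
  ultimately show ?thesis unfolding mj_def by (intro bexI[OF _ m]) simp
qed

lemma M_join:
  assumes f11: "f1 1 = 1" and s2: "strongly_hyperbolic f2"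
    and ne: "fst p \<noteq> fst q" "snd p \<noteq> snd q"
  shows "\<exists>C\<in>M_circles f1 f2 f3 f4. p \<in> C \<and> q \<in> C"
proof -
  let ?M = "M_circles f1 f2 f3 f4"
  have d: "y \<noteq> c \<Longrightarrow> mj ?M (Infty, Fin c) (Fin x, Fin y)" for x y c
    by (rule mj_d) (use f11 s2 in auto)
  have d2: "y \<noteq> c \<Longrightarrow> mj ?M (Fin x, Fin y) (Infty, Fin c)" for x y c using mj_sym[OF d] by blast
  have e2: "x \<noteq> b \<Longrightarrow> mj ?M (Fin x, Fin y) (Fin b, Infty)" for x y b using mj_sym[OF mj_e] by blast
  have b2: "mj ?M (Fin x, Fin y) (Infty, Infty)" for x y using mj_sym[OF mj_b] by blast
  have c2: "mj ?M (Fin b, Infty) (Infty, Fin c)" for b c using mj_sym[OF mj_c] by blast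
  obtain u1 v1 u2 v2 where p: "p = (u1, v1)" and q: "q = (u2, v2)" by (cases p, cases q) auto
  have ne2: "u1 \<noteq> u2" "v1 \<noteq> v2" using ne p q by auto
  have "mj ?M (u1, v1) (u2, v2)"
    using ne2
    by (cases u1; cases v1; cases u2; cases v2) (simp_all add: mj_a mj_b mj_c d mj_e b2 c2 d2 e2)
  then show ?thesis using p q unfolding mj_def by simp
qed



lemma prod_form:
  fixes g :: "point \<Rightarrow> point"
  assumes inj: "inj g"
    and P1: "\<And>p q. p \<noteq> q \<Longrightarrow> fst p = fst q \<or> snd p = snd q \<Longrightarrow> fst (g p) = fst (g q) \<or> snd (g p) = snd (g q)"
    and P2: "\<And>p q. p \<noteq> q \<Longrightarrow> fst (g p) = fst (g q) \<or> snd (g p) = snd (g q) \<Longrightarrow> fst p = fst q \<or> snd p = snd q"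
  shows "(\<forall>p q. (fst p = fst q \<longrightarrow> fst (g p) = fst (g q)) \<and> (snd p = snd q \<longrightarrow> snd (g p) = snd (g q)))
       \<or> (\<forall>p q. (fst p = fst q \<longrightarrow> snd (g p) = snd (g q)) \<and> (snd p = snd q \<longrightarrow> fst (g p) = fst (g q)))"
proof -
  define vv where "vv x y y' \<longleftrightarrow> fst (g (x, y)) = fst (g (x, y'))" for x y y'
  define hh where "hh y x x' \<longleftrightarrow> fst (g (x, y)) = fst (g (x', y))" for y x x'
  have gne: "g p \<noteq> g q" if "p \<noteq> q" for p q using inj that by (meson injD)
  have vert: "snd (g (x, y)) = snd (g (x, y'))" if "y \<noteq> y'" "\<not> vv x y y'" for x y y'
    using P1[of "(x, y)" "(x, y')"] that unfolding vv_def by auto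
  have horiz: "snd (g (x, y)) = snd (g (x', y))" if "x \<noteq> x'" "\<not> hh y x x'" for x x' y
    using P1[of "(x, y)" "(x', y)"] that unfolding hh_def by auto
  have rect: "vv x y y' \<longleftrightarrow> \<not> hh y x x'" if xx: "x \<noteq> x'" and yy: "y \<noteq> y'" for x x' y y'
  proof
    assume v: "vv x y y'"
    show "\<not> hh y x x'"
    proof
      assume "hh y x x'"
      then have "fst (g (x, y')) = fst (g (x', y))" using v unfolding vv_def hh_def by simp
      then have "fst (x, y') = fst (x', y) \<or> snd (x, y') = snd (x', y)"
        using P2[of "(x, y')" "(x', y)"] xx by auto
      then show False using xx yy by auto
    qed
  next
    assume h: "\<not> hh y x x'"
    show "vv x y y'"
    proof (rule ccontr)
      assume "\<not> vv x y y'"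
      then have "snd (g (x, y')) = snd (g (x', y))" using vert[OF yy] horiz[OF xx h] by simp
      then have "fst (x, y') = fst (x', y) \<or> snd (x, y') = snd (x', y)"
        using P2[of "(x, y')" "(x', y)"] xx by auto
      then show False using xx yy by auto
    qed
  qed
  have hsym: "hh y x x' = hh y x' x" for x x' y unfolding hh_def by auto
  have vsym: "vv x y y' = vv x y' y" for x y y' unfolding vv_def by auto
  have U: "vv x y y' \<longleftrightarrow> vv x' y y'" if "x \<noteq> x'" "y \<noteq> y'" for x x' y y'
    using rect[OF that] rect[of x' x y y'] that hsym by auto
  have other: "\<exists>x'. x' \<noteq> (x :: ext)" for x by (cases x) auto
  have W: "vv x y y' \<longleftrightarrow> vv x y y''" if "y' \<noteq> y" "y'' \<noteq> y" for x y y' y''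
  proof -
    obtain x' where "x' \<noteq> x" using other by blast
    then show ?thesis using rect[of x x' y y'] rect[of x x' y y''] that by auto
  qed
  define K where "K \<longleftrightarrow> vv Infty Infty (Fin 0)"
  have V: "vv x y y' \<longleftrightarrow> K" if yy: "y \<noteq> y'" for x y y'
  proof -
    have 1: "vv x y y' \<longleftrightarrow> vv Infty y y'"
      using U[of x Infty y y'] yy by (cases "x = Infty") auto
    have 2: "vv Infty y y' \<longleftrightarrow> K"
    proof (cases "y = Infty")
      case True
      then show ?thesis using W[of y' Infty "Fin 0" Infty] yy unfolding K_def by auto
    next
      case False
      have a: "vv Infty y y' \<longleftrightarrow> vv Infty y Infty" using W[of y' y Infty Infty] yy False by auto
      have b: "vv Infty y Infty \<longleftrightarrow> vv Infty Infty y" using vsym by blast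
      have c: "vv Infty Infty y \<longleftrightarrow> K" using W[of y Infty "Fin 0" Infty] False unfolding K_def by auto
      show ?thesis using a b c by simp
    qed
    show ?thesis using 1 2 by simp
  qed
  have Hh: "hh y x x' \<longleftrightarrow> \<not> K" if xx: "x \<noteq> x'" for x x' y
  proof -
    obtain y' where yy: "y' \<noteq> y" using other by blast
    show ?thesis using rect[OF xx, of y y'] V[of y y' x] yy by auto
  qed
  show ?thesis
  proof (cases K)
    case True
    have "(fst p = fst q \<longrightarrow> fst (g p) = fst (g q)) \<and> (snd p = snd q \<longrightarrow> snd (g p) = snd (g q))" for p q
    proof (intro conjI impI)
      assume e: "fst p = fst q"
      obtain x y y' where pq: "p = (x, y)" "q = (x, y')" using e by (metis prod.collapse)
      show "fst (g p) = fst (g q)"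
      proof (cases "y = y'")
        case False then show ?thesis using V[OF False, of x] True pq unfolding vv_def by simp
      qed (use pq in simp)
    next
      assume e: "snd p = snd q"
      obtain x x' y where pq: "p = (x, y)" "q = (x', y)" using e by (metis prod.collapse)
      show "snd (g p) = snd (g q)"
      proof (cases "x = x'")
        case False then show ?thesis using Hh[OF False, of y] horiz[OF False, of y] True pq by simp
      qed (use pq in simp)
    qed
    then show ?thesis by blast
  next
    case False
    have "(fst p = fst q \<longrightarrow> snd (g p) = snd (g q)) \<and> (snd p = snd q \<longrightarrow> fst (g p) = fst (g q))" for p q
    proof (intro conjI impI)
      assume e: "fst p = fst q"
      obtain x y y' where pq: "p = (x, y)" "q = (x, y')" using e by (metis prod.collapse)
      show "snd (g p) = snd (g q)"
      proof (cases "y = y'")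
        case ne: False then show ?thesis using V[OF ne, of x] vert[OF ne, of x] False pq by simp
      qed (use pq in simp)
    next
      assume e: "snd p = snd q"
      obtain x x' y where pq: "p = (x, y)" "q = (x', y)" using e by (metis prod.collapse)
      show "fst (g p) = fst (g q)"
      proof (cases "x = x'")
        case ne: False then show ?thesis using Hh[OF ne, of y] False pq unfolding hh_def by simp
      qed (use pq in simp)
    qed
    then show ?thesis by blast
  qed
qed



lemma lin_id: "lin 1 0 u = u" by (cases u) (simp_all add: lin_def)

lemma finishA:
  assumes bs: "bij \<sigma>"
    and HA: "\<And>C h. C \<in> M_circles f1 f2 f3 f4 \<Longrightarrow> (\<forall>u. (u, h u) \<in> C) \<Longrightarrow> \<exists>m. is_mob m \<and> (\<forall>u. \<tau> (h u) = m (\<sigma> u))"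
    and C: "C \<in> M_circles f1 f2 f3 f4" and hC: "\<forall>u. (u, h u) \<in> C"
  shows "is_mob h"
proof -
  have L: "\<exists>m. is_mob m \<and> (\<forall>u. \<tau> (lin s t u) = m (\<sigma> u))" if "s \<noteq> 0" for s t
    using lin_line_M[OF that, of f1 f2 f3 f4 t] HA by blast
  obtain m0 where m0: "is_mob m0" "\<forall>u. \<tau> u = m0 (\<sigma> u)" using L[of 1 0] lin_id by auto
  obtain m0' where m0': "is_mob m0'" "\<forall>u. m0' (m0 u) = u" using is_mob_inv[OF m0(1)] by blast
  have "is_mob \<sigma>"
  proof (rule conj_mob[OF bs])
    fix s t :: real assume s: "s \<noteq> 0"
    obtain m where m: "is_mob m" "\<forall>u. \<tau> (lin s t u) = m (\<sigma> u)" using L[OF s] by blast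
    have "\<sigma> (lin s t u) = (m0' \<circ> m) (\<sigma> u)" for u
      using m(2) m0(2) m0'(2) by (metis comp_apply)
    moreover have "is_mob (m0' \<circ> m)" using is_mob_comp m0'(1) m(1) by blast
    ultimately show "\<exists>m. is_mob m \<and> (\<forall>u. \<sigma> (lin s t u) = m (\<sigma> u))" by blast
  qed
  then obtain \<sigma>' where \<sigma>': "is_mob \<sigma>'" "\<forall>u. \<sigma>' (\<sigma> u) = u" using is_mob_inv by blast
  obtain m where m: "is_mob m" "\<forall>u. \<tau> (h u) = m (\<sigma> u)" using HA[OF C hC] by blast
  have "h u = (\<sigma>' \<circ> m0' \<circ> m \<circ> \<sigma>) u" for u
    using m(2) m0(2) m0'(2) \<sigma>'(2) by (metis comp_apply)
  then have "h = \<sigma>' \<circ> m0' \<circ> m \<circ> \<sigma>" by auto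
  then show ?thesis using is_mob_comp \<sigma>'(1) m0'(1) m(1) \<open>is_mob \<sigma>\<close> by metis
qed

lemma finishB:
  assumes bs: "bij \<sigma>"
    and HB: "\<And>C h. C \<in> M_circles f1 f2 f3 f4 \<Longrightarrow> (\<forall>u. (u, h u) \<in> C) \<Longrightarrow> \<exists>m. is_mob m \<and> (\<forall>u. \<tau> u = m (\<sigma> (h u)))"
    and C: "C \<in> M_circles f1 f2 f3 f4" and hC: "\<forall>u. (u, h u) \<in> C"
  shows "is_mob h"
proof -
  have L: "\<exists>m. is_mob m \<and> (\<forall>u. \<tau> u = m (\<sigma> (lin s t u)))" if "s \<noteq> 0" for s t
    using lin_line_M[OF that, of f1 f2 f3 f4 t] HB by blast
  obtain m0 where m0: "is_mob m0" "\<forall>u. \<tau> u = m0 (\<sigma> u)" using L[of 1 0] lin_id by auto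
  have "is_mob \<sigma>"
  proof (rule conj_mob[OF bs])
    fix s t :: real assume s: "s \<noteq> 0"
    obtain m where m: "is_mob m" "\<forall>u. \<tau> u = m (\<sigma> (lin s t u))" using L[OF s] by blast
    obtain m' where m': "is_mob m'" "\<forall>u. m' (m u) = u" using is_mob_inv[OF m(1)] by blast
    have "\<sigma> (lin s t u) = (m' \<circ> m0) (\<sigma> u)" for u
      using m(2) m0(2) m'(2) by (metis comp_apply)
    moreover have "is_mob (m' \<circ> m0)" using is_mob_comp m'(1) m0(1) by blast
    ultimately show "\<exists>m. is_mob m \<and> (\<forall>u. \<sigma> (lin s t u) = m (\<sigma> u))" by blast
  qed
  then obtain \<sigma>' where \<sigma>': "is_mob \<sigma>'" "\<forall>u. \<sigma>' (\<sigma> u) = u" using is_mob_inv by blast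
  obtain m where m: "is_mob m" "\<forall>u. \<tau> u = m (\<sigma> (h u))" using HB[OF C hC] by blast
  obtain m' where m': "is_mob m'" "\<forall>u. m' (m u) = u" using is_mob_inv[OF m(1)] by blast
  have "h u = (\<sigma>' \<circ> m' \<circ> m0 \<circ> \<sigma>) u" for u
    using m(2) m0(2) m'(2) \<sigma>'(2) by (metis comp_apply)
  then have "h = \<sigma>' \<circ> m' \<circ> m0 \<circ> \<sigma>" by auto
  then show ?thesis using is_mob_comp \<sigma>'(1) m'(1) m0(1) \<open>is_mob \<sigma>\<close> by metis
qed

lemma h_form:
  assumes "is_mob h" "h Infty = Fin 0" "h (Fin 0) = Infty" "h (Fin x0) = Fin y0" "x0 \<noteq> 0" "x \<noteq> 0"
  shows "h (Fin x) = Fin (x0 * y0 / x)"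
proof -
  obtain p q r s where d: "p * s - q * r \<noteq> 0" and m: "h = mob p q r s" using assms(1) unfolding is_mob_def by blast
  have r: "r \<noteq> 0" and p: "p = 0" using assms(2) m by (auto simp: mob_Infty split: if_splits)
  have s: "s = 0" using assms(3) m by (auto simp: mob_Fin split: if_splits)
  have "Fin (q / (r * x0)) = Fin y0" using assms(4,5) m r p s by (simp add: mob_Fin)
  then have "q / (r * x0) = y0" by simp
  then have qr: "q / r = x0 * y0" using assms(5) r by (simp add: field_simps)
  have "h (Fin x) = Fin (q / (r * x))" using m r p s assms(6) by (simp add: mob_Fin)
  also have "q / (r * x) = (q / r) / x" by simp
  finally show ?thesis using qr by simp
qed



lemma all_mob:
  assumes s1: "strongly_hyperbolic f1" and s2: "strongly_hyperbolic f2"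
    and s3: "strongly_hyperbolic f3" and s4: "strongly_hyperbolic f4"
    and f11: "f1 1 = 1"
    and iso: "plane_iso g (M_circles f1 f2 f3 f4) classical_circles"
    and C: "C \<in> M_circles f1 f2 f3 f4" and hC: "\<forall>u. (u, h u) \<in> C"
  shows "is_mob h"
proof -
  let ?M = "M_circles f1 f2 f3 f4"
  have bg: "bij g" and bC: "bij_betw (\<lambda>C. g ` C) ?M classical_circles" using iso unfolding plane_iso_def by auto
  have ig: "inj g" using bg bij_is_inj by blast
  have F1: "g ` C \<in> classical_circles" if "C \<in> ?M" for C using bC that bij_betwE by blast
  have F2: "\<exists>C\<in>?M. K = g ` C" if "K \<in> classical_circles" for K
    using bC that unfolding bij_betw_def by blast
  have P1: "fst (g p) = fst (g q) \<or> snd (g p) = snd (g q)" if pq: "p \<noteq> q" "fst p = fst q \<or> snd p = snd q" for p q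
  proof (rule ccontr)
    assume "\<not> (fst (g p) = fst (g q) \<or> snd (g p) = snd (g q))"
    then obtain K where K: "K \<in> classical_circles" "g p \<in> K" "g q \<in> K" using Cl_join by blast
    obtain D where D: "D \<in> ?M" "K = g ` D" using F2[OF K(1)] by blast
    have "p \<in> D" "q \<in> D" using K D ig by (auto simp: inj_image_mem_iff)
    then have "p = q" using M_nojoin[OF s1 s2 s3 s4 D(1)] pq unfolding nojoin_def by blast
    then show False using pq by simp
  qed
  have P2: "fst p = fst q \<or> snd p = snd q" if pq: "p \<noteq> q" "fst (g p) = fst (g q) \<or> snd (g p) = snd (g q)" for p q
  proof (rule ccontr)
    assume "\<not> (fst p = fst q \<or> snd p = snd q)"
    then obtain D where D: "D \<in> ?M" "p \<in> D" "q \<in> D" using M_join[of f1 f2 p q f3 f4] f11 s2 by auto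
    have "g p \<in> g ` D" "g q \<in> g ` D" using D by auto
    then have "g p = g q" using Cl_nojoin[OF F1[OF D(1)]] pq unfolding nojoin_def by blast
    then show False using pq ig by (meson injD)
  qed
  have graph: "\<exists>m. is_mob m \<and> (\<forall>u. snd (g (u, h u)) = m (fst (g (u, h u))))" if DM: "D \<in> ?M" "\<forall>u. (u, h u) \<in> D" for D h
  proof -
    obtain m where m: "is_mob m" "\<forall>p\<in>g ` D. snd p = m (fst p)" using Cl_mob[OF F1[OF DM(1)]] by blast
    show ?thesis using m DM(2) by blast
  qed
  from prod_form[OF ig P1 P2] show ?thesis
  proof
    assume A: "\<forall>p q. (fst p = fst q \<longrightarrow> fst (g p) = fst (g q)) \<and> (snd p = snd q \<longrightarrow> snd (g p) = snd (g q))"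
    define \<sigma> where "\<sigma> u = fst (g (u, Infty))" for u
    define \<tau> where "\<tau> v = snd (g (Infty, v))" for v
    have gf: "g (u, v) = (\<sigma> u, \<tau> v)" for u v
    proof -
      have "fst (g (u, v)) = \<sigma> u" using A unfolding \<sigma>_def by (metis fst_conv)
      moreover have "snd (g (u, v)) = \<tau> v" using A unfolding \<tau>_def by (metis snd_conv)
      ultimately show ?thesis by (metis prod.collapse)
    qed
    have bs: "bij \<sigma>"
    proof (rule bijI)
      show "inj \<sigma>"
      proof (rule injI)
        fix u u' assume "\<sigma> u = \<sigma> u'"
        then have "g (u, Infty) = g (u', Infty)" using gf by simp
        then show "u = u'" using ig by (meson injD prod.inject)
      qed
      show "surj \<sigma>" unfolding surj_def
      proof
        fix w
        obtain p where "g p = (w, Infty)" using bg by (metis bij_def surj_def)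
        then have "\<sigma> (fst p) = w" using gf by (metis fst_conv prod.collapse)
        then show "\<exists>u. w = \<sigma> u" by metis
      qed
    qed
    have HA: "\<exists>m. is_mob m \<and> (\<forall>u. \<tau> (h u) = m (\<sigma> u))" if "D \<in> ?M" "\<forall>u. (u, h u) \<in> D" for D h
      using graph[OF that] gf by simp
    show ?thesis by (rule finishA[OF bs HA C hC])
  next
    assume B: "\<forall>p q. (fst p = fst q \<longrightarrow> snd (g p) = snd (g q)) \<and> (snd p = snd q \<longrightarrow> fst (g p) = fst (g q))"
    define \<sigma> where "\<sigma> v = fst (g (Infty, v))" for v
    define \<tau> where "\<tau> u = snd (g (u, Infty))" for u
    have gf: "g (u, v) = (\<sigma> v, \<tau> u)" for u v
    proof -
      have "fst (g (u, v)) = \<sigma> v" using B unfolding \<sigma>_def by (metis snd_conv)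
      moreover have "snd (g (u, v)) = \<tau> u" using B unfolding \<tau>_def by (metis fst_conv)
      ultimately show ?thesis by (metis prod.collapse)
    qed
    have bs: "bij \<sigma>"
    proof (rule bijI)
      show "inj \<sigma>"
      proof (rule injI)
        fix v v' assume "\<sigma> v = \<sigma> v'"
        then have "g (Infty, v) = g (Infty, v')" using gf by simp
        then show "v = v'" using ig by (meson injD prod.inject)
      qed
      show "surj \<sigma>" unfolding surj_def
      proof
        fix w
        obtain p where "g p = (w, Infty)" using bg by (metis bij_def surj_def)
        then have "\<sigma> (snd p) = w" using gf by (metis fst_conv prod.collapse)
        then show "\<exists>u. w = \<sigma> u" by metis
      qed
    qed
    have HB: "\<exists>m. is_mob m \<and> (\<forall>u. \<tau> u = m (\<sigma> (h u)))" if "D \<in> ?M" "\<forall>u. (u, h u) \<in> D" for D h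
      using graph[OF that] gf by simp
    show ?thesis by (rule finishB[OF bs HB C hC])
  qed
qed



lemma forward:
  assumes s1: "strongly_hyperbolic f1" and s2: "strongly_hyperbolic f2"
    and s3: "strongly_hyperbolic f3" and s4: "strongly_hyperbolic f4"
    and f11: "f1 1 = 1" and f31: "f3 1 = 1"
    and iso: "plane_iso g (M_circles f1 f2 f3 f4) classical_circles"
  shows "\<forall>x>0. f1 x = 1 / x \<and> f2 x = 1 / x \<and> f3 x = 1 / x \<and> f4 x = 1 / x"
proof -
  note am = all_mob[OF s1 s2 s3 s4 f11 iso]
  define h1 where "h1 u = (case u of Fin x \<Rightarrow> (if x = 0 then Infty else Fin (fabc f1 f2 1 0 0 x)) | Infty \<Rightarrow> Fin 0)" for u
  define h3 where "h3 u = (case u of Fin x \<Rightarrow> (if x = 0 then Infty else Fin (fabc f3 f4 1 0 0 (- x))) | Infty \<Rightarrow> Fin 0)" for u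
  have C1: "fabc_circle f1 f2 1 0 0 \<in> M_circles f1 f2 f3 f4" by (rule fabc_in_M) simp
  have m1: "\<forall>u. (u, h1 u) \<in> fabc_circle f1 f2 1 0 0"
  proof
    fix u show "(u, h1 u) \<in> fabc_circle f1 f2 1 0 0"
    proof (cases u)
      case (Fin x)
      show ?thesis
      proof (cases "x = 0")
        case True then show ?thesis using Fin fabc_m2[of 0 f1 f2 1 0] by (simp add: h1_def)
      next
        case False then show ?thesis using Fin fabc_m1[of x 0 f1 f2 1 0] by (simp add: h1_def)
      qed
    next
      case Infty then show ?thesis using fabc_m3[of 0 f1 f2 1 0] by (simp add: h1_def)
    qed
  qed
  have C3: "refl_x ` fabc_circle f3 f4 1 0 0 \<in> M_circles f1 f2 f3 f4"
  proof -
    have "fabc_circle f3 f4 1 0 0 \<in> Cminus f3 f4" unfolding Cminus_def by force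
    then show ?thesis unfolding M_circles_def Cplus_def by blast
  qed
  have m3: "\<forall>u. (u, h3 u) \<in> refl_x ` fabc_circle f3 f4 1 0 0"
  proof
    fix u show "(u, h3 u) \<in> refl_x ` fabc_circle f3 f4 1 0 0"
    proof (cases u)
      case (Fin x)
      show ?thesis
      proof (cases "x = 0")
        case True
        have "refl_x (Fin (- 0), Infty) = (u, h3 u)" using Fin True by (simp add: h3_def refl_x_def)
        then show ?thesis using fabc_m2[of 0 f3 f4 1 0] by (metis image_eqI)
      next
        case False
        have "refl_x (Fin (- x), Fin (fabc f3 f4 1 0 0 (- x))) = (u, h3 u)" using Fin False by (simp add: h3_def refl_x_def)
        moreover have "(Fin (- x), Fin (fabc f3 f4 1 0 0 (- x))) \<in> fabc_circle f3 f4 1 0 0"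
          using fabc_m1[of "- x" 0 f3 f4 1 0] False by simp
        ultimately show ?thesis by (metis image_eqI)
      qed
    next
      case Infty
      have "refl_x (Infty, Fin 0) = (u, h3 u)" using Infty by (simp add: h3_def refl_x_def)
      then show ?thesis using fabc_m3[of 0 f3 f4 1 0] by (metis image_eqI)
    qed
  qed
  have mob1: "is_mob h1" by (rule am[OF C1 m1])
  have mob3: "is_mob h3" by (rule am[OF C3 m3])
  have v1: "h1 (Fin x) = Fin (1 / x)" if "x \<noteq> 0" for x
  proof -
    have "h1 (Fin 1) = Fin 1" using f11 by (simp add: h1_def fabc_def)
    then have "h1 (Fin x) = Fin (1 * 1 / x)"
      by (intro h_form[OF mob1]) (use that in \<open>simp_all add: h1_def\<close>)
    then show ?thesis by simp
  qed
  have v3: "h3 (Fin x) = Fin (- 1 / x)" if "x \<noteq> 0" for x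
  proof -
    have "h3 (Fin (- 1)) = Fin 1" using f31 by (simp add: h3_def fabc_def)
    then have "h3 (Fin x) = Fin ((- 1) * 1 / x)"
      by (intro h_form[OF mob3]) (use that in \<open>simp_all add: h3_def\<close>)
    then show ?thesis by simp
  qed
  show ?thesis
  proof (intro allI impI conjI)
    fix x :: real assume x: "x > 0"
    show "f1 x = 1 / x" using v1[of x] x by (simp add: h1_def fabc_def)
    have "fabc f1 f2 1 0 0 (- x) = 1 / (- x)" using v1[of "- x"] x by (simp add: h1_def)
    then show "f2 x = 1 / x" using x by (simp add: fabc_def)
    have "fabc f3 f4 1 0 0 (- (- x)) = - 1 / (- x)" using v3[of "- x"] x by (simp add: h3_def)
    then show "f3 x = 1 / x" using x by (simp add: fabc_def)
    have "fabc f3 f4 1 0 0 (- x) = - 1 / x" using v3[of x] x by (simp add: h3_def)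
    then show "f4 x = 1 / x" using x by (simp add: fabc_def)
  qed
qed



lemma Cl_alt: "classical_circles = {line_circle s t | s t. s \<noteq> 0} \<union> {hyp a b c | a b c. a \<noteq> 0}"
  unfolding classical_circles_def hyp_def by simp

lemma fabc_val:
  assumes f: "\<forall>x>0. f1 x = 1 / x \<and> f2 x = 1 / x" and x: "x \<noteq> - b"
  shows "fabc f1 f2 a b c x = a / (x + b) + c"
proof (cases "x > - b")
  case True
  then have "f1 (x + b) = 1 / (x + b)" using f by simp
  then show ?thesis using True by (simp add: fabc_def)
next
  case False
  then have xb: "- x - b > 0" using x by simp
  then have "f2 (- x - b) = 1 / (- x - b)" using f by simp
  moreover have "1 / (- x - b) = - (1 / (x + b))"
  proof -
    have "1 / (- x - b) = 1 / (- (x + b))" by simp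
    also have "\<dots> = - (1 / (x + b))" by (rule divide_minus_right)
    finally show ?thesis .
  qed
  ultimately show ?thesis using False by (simp add: fabc_def)
qed

lemma fabc_hyp:
  assumes f: "\<forall>x>0. f1 x = 1 / x \<and> f2 x = 1 / x" and a: "a \<noteq> 0"
  shows "fabc_circle f1 f2 a b c = hyp a (- b) c"
proof (rule set_eqI)
  fix p
  show "p \<in> fabc_circle f1 f2 a b c \<longleftrightarrow> p \<in> hyp a (- b) c"
  proof
    assume "p \<in> fabc_circle f1 f2 a b c"
    then consider (fin) x where "p = (Fin x, Fin (fabc f1 f2 a b c x))" "x \<noteq> - b" | (i) "p = (Fin (- b), Infty)" | (j) "p = (Infty, Fin c)"
      unfolding fabc_circle_def by blast
    then show "p \<in> hyp a (- b) c"
    proof cases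
      case fin
      have xb: "x + b \<noteq> 0" using fin(2) by linarith
      have "(x - - b) * (fabc f1 f2 a b c x - c) = a" using fabc_val[OF f fin(2)] xb by simp
      then show ?thesis using fin(1) hyp_m3 by metis
    next
      case i then show ?thesis using hyp_m2 by metis
    next
      case j then show ?thesis using hyp_m1 by metis
    qed
  next
    assume "p \<in> hyp a (- b) c"
    then consider (fin) x y where "p = (Fin x, Fin y)" "(x - - b) * (y - c) = a" | (i) "p = (Infty, Fin c)" | (j) "p = (Fin (- b), Infty)"
      unfolding hyp_def by blast
    then show "p \<in> fabc_circle f1 f2 a b c"
    proof cases
      case fin
      have xb: "x + b \<noteq> 0" using fin(2) a by auto
      have xb2: "x \<noteq> - b" using xb by linarith
      have "y = a / (x + b) + c" using fin(2) xb by (simp add: field_simps)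
      also have "\<dots> = fabc f1 f2 a b c x" using fabc_val[OF f xb2] by simp
      finally have "p = (Fin x, Fin (fabc f1 f2 a b c x))" using fin(1) by simp
      moreover have "x \<noteq> - b" using xb by linarith
      ultimately show ?thesis using fabc_m1 by metis
    next
      case i then show ?thesis using fabc_m3 by metis
    next
      case j then show ?thesis using fabc_m2 by metis
    qed
  qed
qed

lemma refl_refl: "refl_x (refl_x p) = p"
proof -
  have "ext_neg (ext_neg u) = u" for u by (cases u) auto
  then show ?thesis by (simp add: refl_x_def)
qed

lemma refl_hyp1: "p \<in> hyp a b c \<Longrightarrow> refl_x p \<in> hyp (- a) (- b) c"
proof -
  assume "p \<in> hyp a b c"
  then consider (f) x y where "p = (Fin x, Fin y)" "(x - b) * (y - c) = a" | (i) "p = (Infty, Fin c)" | (j) "p = (Fin b, Infty)"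
    unfolding hyp_def by blast
  then show ?thesis
  proof cases
    case f
    have "(- x - - b) * (y - c) = - a" using f(2) by (simp add: algebra_simps)
    then show ?thesis using f(1) hyp_m3[of "- x" "- b" y c "- a"] by (simp add: refl_x_def)
  next
    case i then show ?thesis using hyp_m1 by (simp add: refl_x_def)
  next
    case j then show ?thesis using hyp_m2[of "- b" "- a" c] by (simp add: refl_x_def)
  qed
qed

lemma refl_hyp: "refl_x ` hyp a b c = hyp (- a) (- b) c"
proof
  show "refl_x ` hyp a b c \<subseteq> hyp (- a) (- b) c" using refl_hyp1 by blast
  show "hyp (- a) (- b) c \<subseteq> refl_x ` hyp a b c"
  proof
    fix p assume "p \<in> hyp (- a) (- b) c"
    then have "refl_x p \<in> hyp a b c" using refl_hyp1[of p "- a" "- b" c] by simp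
    then show "p \<in> refl_x ` hyp a b c" using refl_refl by (metis image_eqI)
  qed
qed

lemma refl_line1: "p \<in> line_circle s t \<Longrightarrow> refl_x p \<in> line_circle (- s) t"
  unfolding line_circle_def refl_x_def by auto

lemma refl_line: "refl_x ` line_circle s t = line_circle (- s) t"
proof
  show "refl_x ` line_circle s t \<subseteq> line_circle (- s) t" using refl_line1 by blast
  show "line_circle (- s) t \<subseteq> refl_x ` line_circle s t"
  proof
    fix p assume "p \<in> line_circle (- s) t"
    then have "refl_x p \<in> line_circle s t" using refl_line1[of p "- s" t] by simp
    then show "p \<in> refl_x ` line_circle s t" using refl_refl by (metis image_eqI)
  qed
qed

lemma backward:
  assumes f: "\<forall>x>0. f1 x = 1 / x \<and> f2 x = 1 / x \<and> f3 x = 1 / x \<and> f4 x = 1 / x"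
  shows "M_circles f1 f2 f3 f4 = classical_circles"
proof -
  have f12: "\<forall>x>0. f1 x = 1 / x \<and> f2 x = 1 / x" and f34: "\<forall>x>0. f3 x = 1 / x \<and> f4 x = 1 / x" using f by auto
  have Cp: "Cplus f3 f4 = {refl_x ` fabc_circle f3 f4 a b c | a b c. a > 0} \<union> {refl_x ` line_circle s t | s t. s < 0}"
    unfolding Cplus_def Cminus_def by blast
  show ?thesis
  proof
    show "M_circles f1 f2 f3 f4 \<subseteq> classical_circles"
    proof
      fix C assume "C \<in> M_circles f1 f2 f3 f4"
      then consider (a) a b c where "a > 0" "C = fabc_circle f1 f2 a b c"
        | (b) s t where "s < 0" "C = line_circle s t"
        | (c) a b c where "a > 0" "C = refl_x ` fabc_circle f3 f4 a b c"
        | (d) s t where "s < 0" "C = refl_x ` line_circle s t"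
        unfolding M_circles_def Cp unfolding Cminus_def by blast
      then show "C \<in> classical_circles"
      proof cases
        case a
        then have "C = hyp a (- b) c" using fabc_hyp[OF f12] by simp
        then show ?thesis using hyp_in_Cl a by simp
      next
        case b then show ?thesis using line_in_Cl by simp
      next
        case c
        then have "C = hyp (- a) (- (- b)) c" using fabc_hyp[OF f34] refl_hyp by simp
        then show ?thesis using hyp_in_Cl c by simp
      next
        case d
        then have "C = line_circle (- s) t" using refl_line by simp
        then show ?thesis using line_in_Cl d by simp
      qed
    qed
    show "classical_circles \<subseteq> M_circles f1 f2 f3 f4"
    proof
      fix C assume "C \<in> classical_circles"
      then consider (l) s t where "s \<noteq> 0" "C = line_circle s t" | (h) a b c where "a \<noteq> 0" "C = hyp a b c"
        unfolding Cl_alt by blast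
      then show "C \<in> M_circles f1 f2 f3 f4"
      proof cases
        case l
        show ?thesis
        proof (cases "s < 0")
          case True then show ?thesis using l line_in_M1 by simp
        next
          case False
          then have s: "s > 0" using l by simp
          have "C = refl_x ` line_circle (- s) t" using l refl_line[of "- s" t] by simp
          then show ?thesis using line_in_M2[OF s] by simp
        qed
      next
        case h
        show ?thesis
        proof (cases "a > 0")
          case True
          have "C = fabc_circle f1 f2 a (- b) c" using h fabc_hyp[OF f12, of a "- b" c] by simp
          then show ?thesis using fabc_in_M True by simp
        next
          case False
          then have a: "- a > 0" using h by simp
          have "fabc_circle f3 f4 (- a) b c = hyp (- a) (- b) c" using fabc_hyp[OF f34, of "- a" b c] a by simp
          then have "C = refl_x ` fabc_circle f3 f4 (- a) b c" using h refl_hyp[of "- a" "- b" c] by simp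
          moreover have "fabc_circle f3 f4 (- a) b c \<in> Cminus f3 f4" unfolding Cminus_def using a by blast
          ultimately show ?thesis unfolding M_circles_def Cplus_def by blast
        qed
      qed
    qed
  qed
qed

theorem theorem5p5:
  fixes f1 f2 f3 f4 :: "real \<Rightarrow> real"
  assumes "strongly_hyperbolic f1" and "strongly_hyperbolic f2"
    and "strongly_hyperbolic f3" and "strongly_hyperbolic f4"
    and "f1 1 = 1" and "f3 1 = 1"
  shows "(\<exists>g. plane_iso g (M_circles f1 f2 f3 f4) classical_circles) \<longleftrightarrow>
         (\<forall>x>0. f1 x = 1 / x \<and> f2 x = 1 / x \<and> f3 x = 1 / x \<and> f4 x = 1 / x)"
proof
  assume "\<exists>g. plane_iso g (M_circles f1 f2 f3 f4) classical_circles"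
  then obtain g where "plane_iso g (M_circles f1 f2 f3 f4) classical_circles" by blast
  then show "\<forall>x>0. f1 x = 1 / x \<and> f2 x = 1 / x \<and> f3 x = 1 / x \<and> f4 x = 1 / x"
    using forward assms by blast
next
  assume f: "\<forall>x>0. f1 x = 1 / x \<and> f2 x = 1 / x \<and> f3 x = 1 / x \<and> f4 x = 1 / x"
  have e: "M_circles f1 f2 f3 f4 = classical_circles" by (rule backward[OF f])
  have "plane_iso id (M_circles f1 f2 f3 f4) classical_circles"
    unfolding plane_iso_def e by (simp add: bij_betw_def inj_on_def)
  then show "\<exists>g. plane_iso g (M_circles f1 f2 f3 f4) classical_circles" by blast
qed


end
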